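(* Let $A$ be an antichain in $R^+$ and $k\ge1$. The ideal $\Phi(A)$ is of nilpotence $k$ if and only if for all $\beta_1,\dots,\beta_{k+1}\in A$ (not necessarily distinct) we have $\sum_{s=1}^{k+1}\beta_s\not\le\theta$.
   Context: $\mathfrak g$ is a complex simple Lie algebra with root system $R$, simple roots $\{\alpha_i\}_{i\in I}$, $Q^+$ the $\mathbb Z_{\ge0}$-span of the simple roots, $R^+=R\cap Q^+$, partial order $\lambda\le\mu$ iff $\mu-\lambda\in Q^+$, and $\theta$ the highest root. An antichain is a subset $A\subseteq R^+$ whose distinct elements are pairwise incomparable for $\le$. $\Phi(A)=\{\alpha\in R^+:\alpha\ge\beta\text{ for some }\beta\in A\}$. A subset $\Phi\subseteq R^+$ is of nilpotence $k$ if for any $\beta_1,\dots,\beta_{k+1}\in\Phi$ (not necessarily distinct) we have $\sum_{p=1}^{k+1}\beta_p\notin R$. *)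

theory Defs
  imports "HOL-Analysis.Analysis"
begin

text \<open>Root systems of complex simple Lie algebras = reduced, irreducible,
crystallographic root systems in a real Euclidean space.\<close>

definition root_system :: "'a::euclidean_space set \<Rightarrow> bool" where
  "root_system R \<longleftrightarrow>
     finite R \<and> 0 \<notin> R \<and> span R = UNIV \<and>
     (\<forall>\<alpha>\<in>R. \<forall>\<beta>\<in>R. \<beta> - (2 * (\<beta> \<bullet> \<alpha>) / (\<alpha> \<bullet> \<alpha>)) *\<^sub>R \<alpha> \<in> R) \<and>
     (\<forall>\<alpha>\<in>R. \<forall>\<beta>\<in>R. 2 * (\<beta> \<bullet> \<alpha>) / (\<alpha> \<bullet> \<alpha>) \<in> \<int>)"

definition reduced_root_system :: "'a::euclidean_space set \<Rightarrow> bool" where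
  "reduced_root_system R \<longleftrightarrow> root_system R \<and>
     (\<forall>\<alpha>\<in>R. \<forall>c::real. c *\<^sub>R \<alpha> \<in> R \<longrightarrow> c = 1 \<or> c = -1)"

definition irreducible_root_system :: "'a::euclidean_space set \<Rightarrow> bool" where
  "irreducible_root_system R \<longleftrightarrow> root_system R \<and>
     \<not> (\<exists>R1 R2. R1 \<noteq> {} \<and> R2 \<noteq> {} \<and> R1 \<union> R2 = R \<and> R1 \<inter> R2 = {} \<and>
                (\<forall>a\<in>R1. \<forall>b\<in>R2. a \<bullet> b = 0))"

definition is_base :: "'a::euclidean_space set \<Rightarrow> 'a set \<Rightarrow> bool" where
  "is_base R \<Delta> \<longleftrightarrow> \<Delta> \<subseteq> R \<and> independent \<Delta> \<and>
     (\<forall>\<beta>\<in>R. \<exists>c::'a \<Rightarrow> int. \<beta> = (\<Sum>\<alpha>\<in>\<Delta>. of_int (c \<alpha>) *\<^sub>R \<alpha>) \<and>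
                 ((\<forall>\<alpha>\<in>\<Delta>. c \<alpha> \<ge> 0) \<or> (\<forall>\<alpha>\<in>\<Delta>. c \<alpha> \<le> 0)))"

definition Qplus :: "'a::euclidean_space set \<Rightarrow> 'a set" where
  "Qplus \<Delta> = {\<Sum>\<alpha>\<in>\<Delta>. of_nat (c \<alpha>) *\<^sub>R \<alpha> | c :: 'a \<Rightarrow> nat. True}"

definition pos_roots :: "'a::euclidean_space set \<Rightarrow> 'a set \<Rightarrow> 'a set" where
  "pos_roots R \<Delta> = R \<inter> Qplus \<Delta>"

definition rle :: "'a::euclidean_space set \<Rightarrow> 'a \<Rightarrow> 'a \<Rightarrow> bool" where
  "rle \<Delta> x y \<longleftrightarrow> y - x \<in> Qplus \<Delta>"

definition is_highest_root :: "'a::euclidean_space set \<Rightarrow> 'a set \<Rightarrow> 'a \<Rightarrow> bool" where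
  "is_highest_root R \<Delta> \<theta> \<longleftrightarrow> \<theta> \<in> pos_roots R \<Delta> \<and> (\<forall>\<alpha>\<in>pos_roots R \<Delta>. rle \<Delta> \<alpha> \<theta>)"

definition antichain :: "'a::euclidean_space set \<Rightarrow> 'a set \<Rightarrow> 'a set \<Rightarrow> bool" where
  "antichain R \<Delta> A \<longleftrightarrow> A \<subseteq> pos_roots R \<Delta> \<and>
     (\<forall>a\<in>A. \<forall>b\<in>A. a \<noteq> b \<longrightarrow> \<not> rle \<Delta> a b)"

definition Phi :: "'a::euclidean_space set \<Rightarrow> 'a set \<Rightarrow> 'a set \<Rightarrow> 'a set" where
  "Phi R \<Delta> A = {\<alpha> \<in> pos_roots R \<Delta>. \<exists>\<beta>\<in>A. rle \<Delta> \<beta> \<alpha>}"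

definition nilpotence :: "'a::euclidean_space set \<Rightarrow> 'a set \<Rightarrow> nat \<Rightarrow> bool" where
  "nilpotence R \<Phi> k \<longleftrightarrow>
     (\<forall>\<beta>::nat \<Rightarrow> 'a. (\<forall>p\<in>{1..k+1}. \<beta> p \<in> \<Phi>) \<longrightarrow> (\<Sum>p=1..k+1. \<beta> p) \<notin> R)"

end

theory Submission imports Defs begin

lemma Qplus_iff: "x \<in> Qplus D \<longleftrightarrow> (\<exists>c::'a\<Rightarrow>nat. x = (\<Sum>a\<in>D. of_nat (c a) *\<^sub>R a))"
  for x :: "'a::euclidean_space" unfolding Qplus_def by auto

lemma Qplus_0: "0 \<in> Qplus D"
  unfolding Qplus_iff by (rule exI[of _ "\<lambda>_. 0"]) simp

lemma Qplus_add: "x \<in> Qplus D \<Longrightarrow> y \<in> Qplus D \<Longrightarrow> x + y \<in> Qplus D"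
proof -
  assume "x \<in> Qplus D" "y \<in> Qplus D"
  then obtain c1 c2 where "x = (\<Sum>a\<in>D. of_nat (c1 a) *\<^sub>R a)" "y = (\<Sum>a\<in>D. of_nat (c2 a) *\<^sub>R a)"
    unfolding Qplus_iff by blast
  then have "x + y = (\<Sum>a\<in>D. of_nat (c1 a + c2 a) *\<^sub>R a)"
    by (simp add: sum.distrib scaleR_add_left)
  then show ?thesis unfolding Qplus_iff by (rule exI[where x="\<lambda>a. c1 a + c2 a"])
qed

lemma Qplus_sum: "finite I \<Longrightarrow> (\<forall>s\<in>I. f s \<in> Qplus D) \<Longrightarrow> sum f I \<in> Qplus D"
  by (induction I rule: finite_induct) (auto intro: Qplus_0 Qplus_add)

lemma Qplus_simple: "finite D \<Longrightarrow> a \<in> D \<Longrightarrow> a \<in> Qplus D"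
proof -
  assume f: "finite D" "a \<in> D"
  have "(\<Sum>b\<in>D. of_nat (if b = a then 1 else 0) *\<^sub>R b) = (\<Sum>b\<in>D. if b = a then b else 0)"
    by (rule sum.cong) auto
  also have "\<dots> = a" using f by (simp add: sum.delta')
  finally have "a = (\<Sum>b\<in>D. of_nat (if b = a then 1 else 0) *\<^sub>R b)" ..
  then show ?thesis unfolding Qplus_iff by (rule exI[where x="\<lambda>b. if b = a then 1 else 0"])
qed

lemma rle_refl: "rle D x x" unfolding rle_def by (simp add: Qplus_0)

lemma rle_trans: "rle D x y \<Longrightarrow> rle D y z \<Longrightarrow> rle D x z"
  unfolding rle_def using Qplus_add[of "y - x" D "z - y"] by simp

lemma rle_sum: "finite I \<Longrightarrow> (\<forall>s\<in>I. rle D (f s) (g s)) \<Longrightarrow> rle D (sum f I) (sum g I)"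
  unfolding rle_def using Qplus_sum[of I "\<lambda>s. g s - f s" D] by (simp add: sum_subtractf)

lemma root_neg: "root_system R \<Longrightarrow> a \<in> R \<Longrightarrow> -a \<in> R"
proof -
  assume r: "root_system R" "a \<in> R"
  then have "a \<noteq> 0" unfolding root_system_def by auto
  then have "a \<bullet> a \<noteq> 0" by simp
  from r have "a - (2 * (a \<bullet> a) / (a \<bullet> a)) *\<^sub>R a \<in> R" unfolding root_system_def by blast
  moreover have "a - 2 *\<^sub>R a = -a" by (simp add: scaleR_2)
  ultimately show ?thesis using \<open>a \<bullet> a \<noteq> 0\<close> by simp
qed

lemma root_add:
  assumes rs: "reduced_root_system R" and a: "a \<in> R" and b: "b \<in> R"
    and neg: "a \<bullet> b < 0" and ne: "b \<noteq> -a"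
  shows "a + b \<in> R"
proof -
  have r: "root_system R" using rs unfolding reduced_root_system_def by auto
  have a0: "a \<noteq> 0" "b \<noteq> 0" using r a b unfolding root_system_def by auto
  have aa: "a \<bullet> a > 0" "b \<bullet> b > 0" using a0 by auto
  define p where "p = 2 * (b \<bullet> a) / (a \<bullet> a)"
  define q where "q = 2 * (a \<bullet> b) / (b \<bullet> b)"
  have pI: "p \<in> \<int>" "q \<in> \<int>" using r a b unfolding root_system_def p_def q_def by auto
  have pn: "p < 0" "q < 0" using neg aa unfolding p_def q_def by (auto simp: inner_commute divide_neg_pos)
  have ncol: "\<bar>a \<bullet> b\<bar> \<noteq> norm a * norm b"
  proof
    assume "\<bar>a \<bullet> b\<bar> = norm a * norm b"
    then have "norm a *\<^sub>R b = norm b *\<^sub>R a \<or> norm a *\<^sub>R b = - norm b *\<^sub>R a"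
      by (simp add: norm_cauchy_schwarz_abs_eq)
    moreover have na: "norm a \<noteq> 0" using a0 by simp
    moreover have "\<And>c. norm a *\<^sub>R b = c *\<^sub>R a \<Longrightarrow> b = (c / norm a) *\<^sub>R a"
    proof -
      fix c assume h: "norm a *\<^sub>R b = c *\<^sub>R a"
      have "b = (1 / norm a) *\<^sub>R (norm a *\<^sub>R b)" using na by simp
      also have "\<dots> = (c / norm a) *\<^sub>R a" unfolding h by simp
      finally show "b = (c / norm a) *\<^sub>R a" .
    qed
    ultimately obtain c where bc: "b = c *\<^sub>R a"
      by (metis scaleR_minus_left)
    then have "c = 1 \<or> c = -1" using rs b a unfolding reduced_root_system_def by blast
    then show False using bc neg ne aa by auto
  qed
  have cs: "\<bar>a \<bullet> b\<bar> < norm a * norm b"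
    using ncol Cauchy_Schwarz_ineq2[of a b] by linarith
  have "(a \<bullet> b)^2 < (norm a * norm b)^2"
  proof -
    have "\<bar>a \<bullet> b\<bar>^2 < (norm a * norm b)^2"
      by (rule power_strict_mono[OF cs]) auto
    then show ?thesis by simp
  qed
  then have "(a \<bullet> b)^2 < (a \<bullet> a) * (b \<bullet> b)"
    by (simp add: power_mult_distrib dot_square_norm)
  then have "p * q < 4" unfolding p_def q_def using aa
    by (simp add: inner_commute field_simps power2_eq_square)
  then have "p = -1 \<or> q = -1" using pI pn
  proof -
    obtain m where m: "p = of_int m" using pI by (auto elim: Ints_cases)
    obtain n where n: "q = of_int n" using pI by (auto elim: Ints_cases)
    have "m < 0" "n < 0" "m * n < 4" using pn \<open>p * q < 4\<close> m n by (auto simp flip: of_int_mult)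
    have "m = -1 \<or> n = -1"
    proof (rule ccontr)
      assume "\<not> (m = -1 \<or> n = -1)"
      then have "2 \<le> -m" "2 \<le> -n" using \<open>m < 0\<close> \<open>n < 0\<close> by auto
      then have "2 * 2 \<le> (-m) * (-n)" by (intro mult_mono) auto
      then show False using \<open>m * n < 4\<close> by simp
    qed
    then show ?thesis using m n by auto
  qed
  then show ?thesis
  proof
    assume "p = -1"
    moreover have "b - p *\<^sub>R a \<in> R" using r a b unfolding root_system_def p_def by blast
    ultimately show ?thesis by (simp add: add.commute)
  next
    assume "q = -1"
    moreover have "a - q *\<^sub>R b \<in> R" using r a b unfolding root_system_def q_def by blast
    ultimately show ?thesis by simp
  qed
qed


lemma g_sum: "linear g \<Longrightarrow> \<forall>x\<in>D. g x = (1::real) \<Longrightarrow>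
   g (\<Sum>a\<in>D. of_nat (c a) *\<^sub>R a) = (\<Sum>a\<in>D. real (c a))"
  by (simp add: linear_sum linear_cmul o_def)

lemma g_Qplus:
  assumes "linear g" "\<forall>x\<in>D. g x = (1::real)" "x \<in> Qplus D" "x \<noteq> 0" "finite D"
  shows "g x \<ge> 1"
proof -
  obtain c where x: "x = (\<Sum>a\<in>D. of_nat (c a) *\<^sub>R a)" using assms(3) unfolding Qplus_iff by blast
  have "\<exists>a\<in>D. c a \<noteq> 0"
  proof (rule ccontr)
    assume "\<not> ?thesis"
    then have "x = 0" unfolding x by simp
    then show False using assms(4) by simp
  qed
  then obtain a where a: "a \<in> D" "c a \<noteq> 0" by blast
  have "real (c a) \<le> (\<Sum>a\<in>D. real (c a))"
    by (rule member_le_sum) (use a assms(5) in auto)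
  then show ?thesis using a g_sum[OF assms(1,2), of c] x by simp
qed

lemma g_Qplus0:
  assumes "linear g" "\<forall>x\<in>D. g x = (1::real)" "x \<in> Qplus D"
  shows "g x \<ge> 0"
proof -
  obtain c where x: "x = (\<Sum>a\<in>D. of_nat (c a) *\<^sub>R a)" using assms(3) unfolding Qplus_iff by blast
  show ?thesis using g_sum[OF assms(1,2), of c] x by (simp add: sum_nonneg)
qed

lemma main_C:
  fixes R D :: "'a::euclidean_space set" and I :: "nat set"
  assumes rs: "reduced_root_system R" and base: "is_base R D" and fin: "finite I" and ne: "I \<noteq> {}"
    and finD: "finite D" and lin: "linear g" and g1: "\<forall>x\<in>D. g x = (1::real)"
  shows "\<And>\<rho> \<beta> c. \<rho> \<in> R \<Longrightarrow> \<forall>s\<in>I. \<beta> s \<in> pos_roots R D \<Longrightarrow>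
     \<rho> - sum \<beta> I = (\<Sum>a\<in>D. of_nat (c a) *\<^sub>R a) \<Longrightarrow> (\<Sum>a\<in>D. c a) = n \<Longrightarrow>
     \<exists>\<delta>. (\<forall>s\<in>I. \<delta> s \<in> pos_roots R D \<and> rle D (\<beta> s) (\<delta> s)) \<and> sum \<delta> I \<in> R"
proof (induction n rule: less_induct)
  case (less n \<rho> \<beta> c)
  have DR: "D \<subseteq> R" using base unfolding is_base_def by auto
  define \<nu> where "\<nu> = \<rho> - sum \<beta> I"
  show ?case
  proof (cases "\<nu> = 0")
    case True
    then show ?thesis using less.prems(1,2) by (intro exI[of _ \<beta>]) (auto simp: \<nu>_def rle_refl)
  next
    case False
    note nz = False
    have nn: "\<nu> \<bullet> \<nu> = (\<Sum>a\<in>D. real (c a) * (\<nu> \<bullet> a))"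
      unfolding \<nu>_def less.prems(3)
      by (simp add: inner_sum_right)
    obtain a where a: "a \<in> D" "c a > 0" "\<nu> \<bullet> a > 0"
    proof -
      have "\<exists>a\<in>D. c a > 0 \<and> \<nu> \<bullet> a > 0"
      proof (rule ccontr)
        assume "\<not> ?thesis"
        then have "\<forall>a\<in>D. real (c a) * (\<nu> \<bullet> a) \<le> 0"
          by (metis gr0I linorder_not_le mult_nonneg_nonpos of_nat_0 of_nat_0_le_iff mult_zero_left order_refl)
        then have "\<nu> \<bullet> \<nu> \<le> 0" unfolding nn by (simp add: sum_nonpos)
        then show False using False by (metis inner_ge_zero inner_eq_zero_iff order_antisym)
      qed
      then show ?thesis using that by blast
    qed
    define c' where "c' = c(a := c a - 1)"
    have sumc: "(\<Sum>b\<in>D. c b) = c a + (\<Sum>b\<in>D-{a}. c b)" using a(1) finD by (simp add: sum.remove)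
    have sumc': "(\<Sum>b\<in>D. c' b) = c' a + (\<Sum>b\<in>D-{a}. c' b)" using a(1) finD by (simp add: sum.remove)
    have "(\<Sum>b\<in>D-{a}. c' b) = (\<Sum>b\<in>D-{a}. c b)" unfolding c'_def by (rule sum.cong) auto
    then have lt: "(\<Sum>b\<in>D. c' b) < n" using sumc sumc' a(2) less.prems(4) unfolding c'_def by simp
    have vs: "(\<Sum>b\<in>D. of_nat (c b) *\<^sub>R b) = of_nat (c a) *\<^sub>R a + (\<Sum>b\<in>D-{a}. of_nat (c b) *\<^sub>R b)"
      using a(1) finD by (simp add: sum.remove)
    have vs': "(\<Sum>b\<in>D. of_nat (c' b) *\<^sub>R b) = of_nat (c' a) *\<^sub>R a + (\<Sum>b\<in>D-{a}. of_nat (c' b) *\<^sub>R b)"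
      using a(1) finD by (simp add: sum.remove)
    have "(\<Sum>b\<in>D-{a}. of_nat (c' b) *\<^sub>R b) = (\<Sum>b\<in>D-{a}. of_nat (c b) *\<^sub>R b)"
      unfolding c'_def by (rule sum.cong) auto
    moreover have "of_nat (c' a) *\<^sub>R a = of_nat (c a) *\<^sub>R a - a"
      using a(2) unfolding c'_def by (simp add: of_nat_diff scaleR_diff_left)
    ultimately have nu': "\<nu> - a = (\<Sum>b\<in>D. of_nat (c' b) *\<^sub>R b)"
      using vs vs' less.prems(3) unfolding \<nu>_def by simp
    have aR: "a \<in> R" using a(1) DR by auto
    have aQ: "a \<in> Qplus D" using Qplus_simple[OF finD a(1)] .
    have na: "\<nu> \<bullet> a = \<rho> \<bullet> a - (\<Sum>s\<in>I. \<beta> s \<bullet> a)"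
      unfolding \<nu>_def by (simp add: inner_diff_left inner_sum_left)
    show ?thesis
    proof (cases "\<exists>s\<in>I. \<beta> s \<bullet> a < 0")
      case True
      then obtain s where s: "s \<in> I" "\<beta> s \<bullet> a < 0" by blast
      have bpos: "\<beta> s \<in> R" "\<beta> s \<in> Qplus D" using less.prems(2) s(1) unfolding pos_roots_def by auto
      have "a \<noteq> - \<beta> s"
      proof
        assume h: "a = - \<beta> s"
        have "\<beta> s \<noteq> 0" using bpos rs unfolding reduced_root_system_def root_system_def by auto
        then have "g (\<beta> s) \<ge> 1" using g_Qplus[OF lin g1 bpos(2) _ finD] by simp
        moreover have "g a = 1" using g1 a(1) by simp
        moreover have "g a = - g (\<beta> s)" unfolding h by (simp add: linear_neg[OF lin])
        ultimately show False by simp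
      qed
      then have bsa: "\<beta> s + a \<in> R" using root_add[OF rs bpos(1) aR s(2)] by simp
      define \<beta>' where "\<beta>' = (\<lambda>t. \<beta> t + (if t = s then a else 0))"
      have sb: "sum \<beta>' I = sum \<beta> I + a" unfolding \<beta>'_def using s(1) fin
        by (simp only: sum.distrib) (simp add: sum.delta)
      have pos': "\<forall>t\<in>I. \<beta>' t \<in> pos_roots R D"
        using less.prems(2) bsa bpos(2) aQ unfolding \<beta>'_def pos_roots_def by (auto intro: Qplus_add)
      have "\<rho> - sum \<beta>' I = (\<Sum>b\<in>D. of_nat (c' b) *\<^sub>R b)" using nu' sb unfolding \<nu>_def by (simp add: algebra_simps)
      from less.IH[OF lt less.prems(1) pos' this refl] obtain \<delta> where
        d: "\<forall>t\<in>I. \<delta> t \<in> pos_roots R D \<and> rle D (\<beta>' t) (\<delta> t)" "sum \<delta> I \<in> R" by blast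
      have "\<forall>t\<in>I. rle D (\<beta> t) (\<beta>' t)" unfolding \<beta>'_def rle_def using aQ Qplus_0 by auto
      then show ?thesis using d by (meson rle_trans)
    next
      case False
      then have "(\<Sum>s\<in>I. \<beta> s \<bullet> a) \<ge> 0" by (auto intro: sum_nonneg simp: not_less)
      then have ra: "\<rho> \<bullet> a > 0" using na a(3) by simp
      have "\<rho> \<noteq> a"
      proof
        assume h: "\<rho> = a"
        have "g \<rho> = 1" using h g1 a(1) by simp
        have "\<nu> \<in> Qplus D" unfolding Qplus_iff \<nu>_def less.prems(3) by blast
        then have gv: "g \<nu> \<ge> 1" using g_Qplus[OF lin g1 _ nz finD] by simp
        obtain s where s: "s \<in> I" using ne by blast
        have bpos: "\<beta> s \<in> Qplus D" "\<beta> s \<in> R" using less.prems(2) s unfolding pos_roots_def by auto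
        have "\<beta> s \<noteq> 0" using bpos rs unfolding reduced_root_system_def root_system_def by auto
        then have g1s: "g (\<beta> s) \<ge> 1" using g_Qplus[OF lin g1 bpos(1) _ finD] by simp
        have "g (sum \<beta> I) = (\<Sum>t\<in>I. g (\<beta> t))" by (simp add: linear_sum[OF lin])
        also have "\<dots> = g (\<beta> s) + (\<Sum>t\<in>I-{s}. g (\<beta> t))" using s fin by (simp add: sum.remove)
        also have "\<dots> \<ge> 1" using g1s g_Qplus0[OF lin g1] less.prems(2)
          by (smt (verit) DiffD1 pos_roots_def IntD2 sum_nonneg)
        finally have "g (sum \<beta> I) \<ge> 1" .
        moreover have "g \<rho> = g (sum \<beta> I) + g \<nu>" unfolding \<nu>_def by (simp add: linear_diff[OF lin])
        ultimately show False using gv \<open>g \<rho> = 1\<close> by simp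
      qed
      then have "- a \<noteq> - \<rho>" by simp
      moreover have "\<rho> \<bullet> (- a) < 0" using ra by simp
      moreover have "- a \<in> R" using root_neg aR rs unfolding reduced_root_system_def by blast
      ultimately have "\<rho> + - a \<in> R" using root_add[OF rs less.prems(1)] by blast
      then have rR: "\<rho> - a \<in> R" by simp
      have "(\<rho> - a) - sum \<beta> I = (\<Sum>b\<in>D. of_nat (c' b) *\<^sub>R b)" using nu' unfolding \<nu>_def by (simp add: algebra_simps)
      from less.IH[OF lt rR less.prems(2) this refl] show ?thesis .
    qed
  qed
qed


theorem theorem1p5:
  fixes R \<Delta> A :: "'a::euclidean_space set" and \<theta> :: 'a and k :: nat
  assumes "reduced_root_system R" and "irreducible_root_system R"
    and "is_base R \<Delta>" and "is_highest_root R \<Delta> \<theta>"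
    and "antichain R \<Delta> A" and "k \<ge> 1"
  shows "nilpotence R (Phi R \<Delta> A) k \<longleftrightarrow>
    (\<forall>\<beta>::nat \<Rightarrow> 'a. (\<forall>s\<in>{1..k+1}. \<beta> s \<in> A) \<longrightarrow> \<not> rle \<Delta> (\<Sum>s=1..k+1. \<beta> s) \<theta>)"
proof -
  have finD: "finite \<Delta>" using assms(3) unfolding is_base_def by (auto intro: finiteI_independent)
  obtain g where lin: "linear g" and g1: "\<forall>x\<in>\<Delta>. g x = (1::real)"
    using linear_independent_extend[of \<Delta> "\<lambda>_. 1::real"] assms(3) unfolding is_base_def by blast
  have Apos: "A \<subseteq> pos_roots R \<Delta>" using assms(5) unfolding antichain_def by auto
  have thR: "\<theta> \<in> R" using assms(4) unfolding is_highest_root_def pos_roots_def by auto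
  show ?thesis
  proof
    assume nil: "nilpotence R (Phi R \<Delta> A) k"
    show "\<forall>\<beta>::nat \<Rightarrow> 'a. (\<forall>s\<in>{1..k+1}. \<beta> s \<in> A) \<longrightarrow> \<not> rle \<Delta> (\<Sum>s=1..k+1. \<beta> s) \<theta>"
    proof (intro allI impI notI)
      fix \<beta> :: "nat \<Rightarrow> 'a"
      assume bA: "\<forall>s\<in>{1..k+1}. \<beta> s \<in> A" and le: "rle \<Delta> (\<Sum>s=1..k+1. \<beta> s) \<theta>"
      obtain c where c: "\<theta> - (\<Sum>s=1..k+1. \<beta> s) = (\<Sum>a\<in>\<Delta>. of_nat (c a) *\<^sub>R a)"
        using le unfolding rle_def Qplus_iff by blast
      have "\<forall>s\<in>{1..k+1}. \<beta> s \<in> pos_roots R \<Delta>" using bA Apos by auto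
      from main_C[OF assms(1,3) _ _ finD lin g1 thR this c refl]
      obtain \<delta> where d: "\<forall>s\<in>{1..k+1}. \<delta> s \<in> pos_roots R \<Delta> \<and> rle \<Delta> (\<beta> s) (\<delta> s)"
        "sum \<delta> {1..k+1} \<in> R" by auto
      have "\<forall>p\<in>{1..k+1}. \<delta> p \<in> Phi R \<Delta> A" using d(1) bA unfolding Phi_def by auto
      then show False using nil d(2) unfolding nilpotence_def by blast
    qed
  next
    assume rhs: "\<forall>\<beta>::nat \<Rightarrow> 'a. (\<forall>s\<in>{1..k+1}. \<beta> s \<in> A) \<longrightarrow> \<not> rle \<Delta> (\<Sum>s=1..k+1. \<beta> s) \<theta>"
    show "nilpotence R (Phi R \<Delta> A) k"
      unfolding nilpotence_def
    proof (intro allI impI notI)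
      fix \<delta> :: "nat \<Rightarrow> 'a"
      assume dP: "\<forall>p\<in>{1..k+1}. \<delta> p \<in> Phi R \<Delta> A" and sR: "(\<Sum>p=1..k+1. \<delta> p) \<in> R"
      define \<beta> where "\<beta> = (\<lambda>p. SOME b. b \<in> A \<and> rle \<Delta> b (\<delta> p))"
      have b: "\<forall>p\<in>{1..k+1}. \<beta> p \<in> A \<and> rle \<Delta> (\<beta> p) (\<delta> p)"
      proof
        fix p assume "p \<in> {1..k+1}"
        then have "\<exists>b. b \<in> A \<and> rle \<Delta> b (\<delta> p)" using dP unfolding Phi_def by auto
        then show "\<beta> p \<in> A \<and> rle \<Delta> (\<beta> p) (\<delta> p)" unfolding \<beta>_def by (rule someI_ex)
      qed
      have "(\<Sum>p=1..k+1. \<delta> p) \<in> Qplus \<Delta>"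
        using dP by (intro Qplus_sum) (auto simp: Phi_def pos_roots_def)
      then have "(\<Sum>p=1..k+1. \<delta> p) \<in> pos_roots R \<Delta>" using sR unfolding pos_roots_def by auto
      then have "rle \<Delta> (\<Sum>p=1..k+1. \<delta> p) \<theta>" using assms(4) unfolding is_highest_root_def by auto
      moreover have "rle \<Delta> (\<Sum>p=1..k+1. \<beta> p) (\<Sum>p=1..k+1. \<delta> p)" using b by (intro rle_sum) auto
      ultimately have "rle \<Delta> (\<Sum>p=1..k+1. \<beta> p) \<theta>" using rle_trans by blast
      then show False using rhs b by blast
    qed
  qed
qed

end
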